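(* Let $B$ be a translation invariant differentiation basis in $\mathbb{R}^2$. Then every $W_B$-set $E\subset\Gamma_2$ is a set of type $G_{\delta\sigma}$ in $\Gamma_2$.
   Context: A differentiation basis in $\mathbb{R}^n$ is a mapping $B$ assigning to each $x\in\mathbb{R}^n$ a family $B(x)$ of bounded measurable sets of positive Lebesgue measure containing $x$, such that there is a sequence $R_k\in B(x)$ with $\operatorname{diam}R_k\to 0$. $B$ is translation invariant if $B(x)=\{x+R: R\in B(0)\}$ for every $x$. For $f\in L(\mathbb{R}^n)$ the upper and lower derivatives of $\int f$ at $x$ with respect to $B$ are $\overline{D}_B(\int f,x)=\limsup_{R\in B(x),\,\operatorname{diam}R\to0}\frac{1}{|R|}\int_R f$ and $\underline{D}_B(\int f,x)=\liminf_{R\in B(x),\,\operatorname{diam}R\to0}\frac{1}{|R|}\int_R f$; $B$ differentiates $\int f$ if both equal $f(x)$ for almost every $x$. $F_B$ denotes the class of $f\in L(\mathbb{R}^n)$ whose integrals are differentiated by $B$. $\Gamma_2$ is the set of rotations of $\mathbb{R}^2$ about the origin, identified with the unit circle $\mathbb{T}$ (a rotation by angle $\theta$ corresponds to $e^{i\theta}$), with the distance between two rotations being the length of the shorter arc of $\mathbb{T}$ between the corresponding points; the topology on $\Gamma_2$ is that of this metric. For $\gamma\in\Gamma_2$ the $\gamma$-rotated basis is $B(\gamma)(x)=\{x+\gamma(R-x): R\in B(x)\}$. A set $E\subset\Gamma_2$ is a $W_B$-set if there exists $f\in L(\mathbb{R}^2)$ such that (1) $f\notin F_{B(\gamma)}$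 for every $\gamma\in E$, and (2) $f\in F_{B(\gamma)}$ for every $\gamma\notin E$. *)

theory Defs
  imports "HOL-Analysis.Analysis"
begin

text \<open>The plane R^2 is modelled as the type complex (a 2-dimensional Euclidean space),
  so that the rotation by angle theta is multiplication by the unit complex number e^(i theta).\<close>

type_synonym basis = "complex \<Rightarrow> complex set set"

definition differentiation_basis :: "basis \<Rightarrow> bool" where
  "differentiation_basis B \<longleftrightarrow>
     (\<forall>x. (\<forall>R\<in>B x. bounded R \<and> R \<in> sets lebesgue \<and> measure lebesgue R > 0 \<and> x \<in> R) \<and>
          (\<exists>Rk :: nat \<Rightarrow> complex set. (\<forall>k. Rk k \<in> B x) \<and> (\<lambda>k. diameter (Rk k)) \<longlonglongrightarrow> 0))"

definition translation_invariant :: "basis \<Rightarrow> bool" where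
  "translation_invariant B \<longleftrightarrow> (\<forall>x. B x = (\<lambda>R. (\<lambda>y. x + y) ` R) ` B 0)"

definition avg :: "(complex \<Rightarrow> real) \<Rightarrow> complex set \<Rightarrow> real" where
  "avg f R = (LINT y:R|lebesgue. f y) / measure lebesgue R"

definition upper_deriv :: "basis \<Rightarrow> (complex \<Rightarrow> real) \<Rightarrow> complex \<Rightarrow> ereal" where
  "upper_deriv B f x = (INF e\<in>{e::real. e > 0}. SUP R\<in>{R\<in>B x. diameter R < e}. ereal (avg f R))"

definition lower_deriv :: "basis \<Rightarrow> (complex \<Rightarrow> real) \<Rightarrow> complex \<Rightarrow> ereal" where
  "lower_deriv B f x = (SUP e\<in>{e::real. e > 0}. INF R\<in>{R\<in>B x. diameter R < e}. ereal (avg f R))"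

definition F_class :: "basis \<Rightarrow> (complex \<Rightarrow> real) set" where
  "F_class B = {f. integrable lebesgue f \<and>
      (AE x in lebesgue. upper_deriv B f x = ereal (f x) \<and> lower_deriv B f x = ereal (f x))}"

text \<open>Gamma_2: rotations, identified with the unit circle.\<close>
definition Gamma2 :: "complex set" where
  "Gamma2 = sphere 0 1"

definition rotated_basis :: "basis \<Rightarrow> complex \<Rightarrow> basis" where
  "rotated_basis B \<gamma> x = (\<lambda>R. (\<lambda>y. x + \<gamma> * (y - x)) ` R) ` B x"

definition W_set :: "basis \<Rightarrow> complex set \<Rightarrow> bool" where
  "W_set B E \<longleftrightarrow> E \<subseteq> Gamma2 \<and>
     (\<exists>f. integrable lebesgue f \<and>
          (\<forall>\<gamma>\<in>E. f \<notin> F_class (rotated_basis B \<gamma>)) \<and>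
          (\<forall>\<gamma>\<in>Gamma2 - E. f \<in> F_class (rotated_basis B \<gamma>)))"

definition arc_dist :: "complex \<Rightarrow> complex \<Rightarrow> real" where
  "arc_dist z w = \<bar>Arg (z / w)\<bar>"

definition open_Gamma2 :: "complex set \<Rightarrow> bool" where
  "open_Gamma2 U \<longleftrightarrow> U \<subseteq> Gamma2 \<and>
     (\<forall>z\<in>U. \<exists>e>0. \<forall>w\<in>Gamma2. arc_dist z w < e \<longrightarrow> w \<in> U)"

definition G_delta_sigma_Gamma2 :: "complex set \<Rightarrow> bool" where
  "G_delta_sigma_Gamma2 E \<longleftrightarrow>
     (\<exists>U :: nat \<Rightarrow> nat \<Rightarrow> complex set. (\<forall>n m. open_Gamma2 (U n m)) \<and>
        E = (\<Union>n. \<Inter>m. U n m))"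

end

theory Submission
  imports Defs "HOL-Analysis.Analysis"
begin

definition psi2 :: "real^2 \<Rightarrow> complex" where "psi2 v = Complex (v$1) (v$2)"
definition phi2 :: "complex \<Rightarrow> real^2" where "phi2 z = vector [Re z, Im z]"

lemma phi2_psi2[simp]: "phi2 (psi2 v) = v"
  unfolding phi2_def psi2_def by (simp add: vec_eq_iff forall_2)
lemma psi2_phi2[simp]: "psi2 (phi2 z) = z"
  unfolding phi2_def psi2_def by (simp add: complex_eq_iff)

lemma psi2_borel[measurable]: "psi2 \<in> borel_measurable borel"
  unfolding psi2_def by (intro borel_measurable_continuous_onI continuous_intros) 

lemma prod_Basis2: "(\<Prod>b\<in>(Basis::(real^2) set). (x::real^2) \<bullet> b) = x$1 * x$2"
  by (simp add: Basis_vec_def cart_eq_inner_axis axis_eq_axis prod.UNION_disjoint UNIV_2)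

lemma lborel_psi2: "(lborel :: complex measure) = distr lborel borel psi2"
proof (rule lborel_eqI)
  fix l u :: complex assume le: "\<And>b. b \<in> Basis \<Longrightarrow> l \<bullet> b \<le> u \<bullet> b"
  have "psi2 -` box l u = box (phi2 l) (phi2 u)"
    by (auto simp: mem_box_cart mem_box Basis_complex_def psi2_def phi2_def forall_2)
  moreover have "Re l \<le> Re u" "Im l \<le> Im u" using le[of 1] le[of \<i>] by (auto simp: Basis_complex_def)
  moreover have "\<forall>b\<in>Basis. phi2 l \<bullet> b \<le> phi2 u \<bullet> b"
    using \<open>Re l \<le> Re u\<close> \<open>Im l \<le> Im u\<close>
    by (auto simp: Basis_vec_def inner_axis phi2_def forall_2)
  moreover have "(\<Prod>b\<in>Basis. (phi2 u - phi2 l) \<bullet> b) = (Re u - Re l) * (Im u - Im l)"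
    unfolding prod_Basis2 by (simp add: phi2_def)
  ultimately show "emeasure (distr lborel borel psi2) (box l u) = (\<Prod>b\<in>Basis. (u - l) \<bullet> b)"
    by (simp add: emeasure_distr emeasure_lborel_box_eq Basis_complex_def)
qed simp

lemma psi2_vimage: "psi2 -` C = phi2 ` C"
  by (auto simp: image_iff) (metis psi2_phi2 phi2_psi2)+

lemma emeasure_phi2: "C \<in> sets borel \<Longrightarrow> emeasure lborel (phi2 ` C) = emeasure lborel C"
proof -
  assume C: "C \<in> sets borel"
  have "emeasure (lborel::complex measure) C = emeasure (distr lborel borel psi2) C"
    using lborel_psi2 by metis
  also have "\<dots> = emeasure lborel (psi2 -` C)"
    using C by (simp add: emeasure_distr)
  finally show ?thesis by (simp add: psi2_vimage)
qed

lemma linear_phi2: "linear phi2"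
  by (rule linearI) (auto simp: phi2_def vec_eq_iff forall_2)
lemma linear_psi2: "linear psi2"
  by (rule linearI) (auto simp: psi2_def complex_eq_iff)
lemma norm_phi2: "norm (phi2 z) = norm z"
  by (simp add: phi2_def norm_eq_sqrt_inner inner_vec_def UNIV_2 cmod_def power2_eq_square inner_complex_def)
lemma continuous_phi2: "continuous_on A phi2"
  using linear_phi2 linear_continuous_on linear_linear by blast

lemma orth_rot:
  assumes "norm \<gamma> = 1"
  shows "orthogonal_transformation (\<lambda>v. phi2 (\<gamma> * psi2 v))"
  unfolding orthogonal_transformation
proof
  show "linear (\<lambda>v. phi2 (\<gamma> * psi2 v))"
    by (rule linearI) (auto simp: linear_add[OF linear_phi2] linear_add[OF linear_psi2]
       linear_cmul[OF linear_phi2] linear_cmul[OF linear_psi2] distrib_left)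
  show "\<forall>v. norm (phi2 (\<gamma> * psi2 v)) = norm v"
    using assms by (metis norm_phi2 norm_mult mult_1 phi2_psi2)
qed

lemma measure_rot_cbox:
  fixes a b :: complex
  assumes g: "norm \<gamma> = 1"
  shows "measure lebesgue ((*) \<gamma> ` cbox a b) = measure lebesgue (cbox a b)"
proof -
  let ?r = "\<lambda>v. phi2 (\<gamma> * psi2 v)"
  have cpt1: "compact ((*) \<gamma> ` cbox a b)"
    by (intro compact_continuous_image continuous_intros) auto
  have cpt2: "compact (phi2 ` cbox a b)"
    by (intro compact_continuous_image continuous_phi2) auto
  have eq: "phi2 ` ((*) \<gamma> ` cbox a b) = ?r ` (phi2 ` cbox a b)"
    by (auto simp: image_iff)
  have "measure lebesgue ((*) \<gamma> ` cbox a b) = measure lborel ((*) \<gamma> ` cbox a b)"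
    using cpt1 by (simp add: measure_completion compact_imp_closed borel_closed)
  also have "\<dots> = measure lborel (phi2 ` ((*) \<gamma> ` cbox a b))"
    using cpt1 by (simp add: measure_def emeasure_phi2 compact_imp_closed borel_closed)
  also have "\<dots> = measure lebesgue (?r ` (phi2 ` cbox a b))"
    unfolding eq using compact_continuous_image[OF _ cpt2, of ?r] orth_rot[OF g]
    by (metis measure_completion compact_imp_closed borel_closed sets_lborel orthogonal_transformation_linear linear_continuous_on linear_linear)
  also have "\<dots> = measure lebesgue (phi2 ` cbox a b)"
    by (rule measure_orthogonal_image[OF orth_rot[OF g]]) (simp add: lmeasurable_compact cpt2)
  also have "\<dots> = measure lborel (phi2 ` cbox a b)"
    using cpt2 by (simp add: measure_completion compact_imp_closed borel_closed)
  also have "\<dots> = measure lborel (cbox a b)"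
    by (simp add: measure_def emeasure_phi2)
  also have "\<dots> = measure lebesgue (cbox a b)"
    by (simp add: measure_completion)
  finally show ?thesis .
qed

lemma rot_lmeasurable:
  fixes S :: "complex set"
  assumes g: "norm \<gamma> = 1" and S: "S \<in> lmeasurable"
  shows "(*) \<gamma> ` S \<in> lmeasurable" "measure lebesgue ((*) \<gamma> ` S) = measure lebesgue S"
proof -
  have "linear ((*) \<gamma>)"
    using bounded_linear_mult_right[of \<gamma>] linear_linear by blast
  then show "(*) \<gamma> ` S \<in> lmeasurable" "measure lebesgue ((*) \<gamma> ` S) = measure lebesgue S"
    using measure_linear_sufficient[of "(*) \<gamma>" S 1] measure_rot_cbox[OF g] S by auto
qed

lemma abs_cont:
  fixes f :: "complex \<Rightarrow> real"
  assumes f: "integrable lebesgue f" and e: "e > 0"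
  shows "\<exists>d>0. \<forall>A\<in>sets lebesgue. emeasure lebesgue A < ennreal d \<longrightarrow>
           integral\<^sup>L lebesgue (\<lambda>y. indicator A y * \<bar>f y\<bar>) < e"
proof -
  define g where "g N x = max (\<bar>f x\<bar> - real N) 0" for N :: nat and x
  have fm: "f \<in> borel_measurable lebesgue" using f by auto
  have gm: "g N \<in> borel_measurable lebesgue" for N unfolding g_def using fm by measurable
  have "(\<lambda>N. integral\<^sup>L lebesgue (g N)) \<longlonglongrightarrow> integral\<^sup>L lebesgue (\<lambda>x::complex. 0::real)"
  proof (rule integral_dominated_convergence[of "\<lambda>x. 0::real" lebesgue g "\<lambda>x. \<bar>f x\<bar>"])
    show "(\<lambda>x. 0::real) \<in> borel_measurable lebesgue" by simp
    show "g N \<in> borel_measurable lebesgue" for N unfolding g_def using fm by measurable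
    show "integrable lebesgue (\<lambda>x. \<bar>f x\<bar>)" using f by auto
    show "AE x in lebesgue. (\<lambda>N. g N x) \<longlonglongrightarrow> 0"
    proof (rule AE_I2)
      fix x
      obtain M :: nat where "\<bar>f x\<bar> \<le> real M" using real_arch_simple by blast
      then have "\<forall>N\<ge>M. g N x = 0" unfolding g_def by auto
      then show "(\<lambda>N. g N x) \<longlonglongrightarrow> 0"
        by (intro tendsto_eventually) (auto simp: eventually_sequentially)
    qed
    show "AE x in lebesgue. norm (g N x) \<le> \<bar>f x\<bar>" for N
      by (rule AE_I2) (auto simp: g_def)
  qed
  then have "(\<lambda>N. integral\<^sup>L lebesgue (g N)) \<longlonglongrightarrow> 0" by simp
  then obtain N where N: "integral\<^sup>L lebesgue (g N) < e/2"
    using e by (metis (no_types, lifting) LIMSEQ_D abs_less_iff diff_zero half_gt_zero le_refl real_norm_def)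
  have gi: "integrable lebesgue (g N)"
    by (rule Bochner_Integration.integrable_bound[OF integrable_abs[OF f] gm])
       (auto simp: g_def)
  define d where "d = e / (2 * (real N + 1))"
  have d: "d > 0" using e by (simp add: d_def)
  show ?thesis
  proof (intro exI[of _ d] conjI d ballI impI)
    fix A :: "complex set" assume A: "A \<in> sets lebesgue" "emeasure lebesgue A < ennreal d"
    have Afin: "emeasure lebesgue A < \<infinity>" using A(2) by (simp add: order_less_trans)
    have mA: "measure lebesgue A < d"
    proof -
      have "emeasure lebesgue A = ennreal (measure lebesgue A)"
        using Afin by (intro emeasure_eq_ennreal_measure) auto
      with A(2) show ?thesis using d by (metis ennreal_less_iff measure_nonneg)
    qed
    have ii: "integrable lebesgue (indicator A :: complex \<Rightarrow> real)"
      using A Afin by auto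
    have "integral\<^sup>L lebesgue (\<lambda>y. indicator A y * \<bar>f y\<bar>) \<le>
          integral\<^sup>L lebesgue (\<lambda>y. g N y + real N * indicator A y)"
    proof (rule integral_mono)
      show "integrable lebesgue (\<lambda>y. indicator A y * \<bar>f y\<bar>)"
        using integrable_mult_indicator[OF A(1) integrable_abs[OF f]] by simp
      show "integrable lebesgue (\<lambda>y. g N y + real N * indicator A y)"
        using gi ii by auto
      show "indicator A y * \<bar>f y\<bar> \<le> g N y + real N * indicator A y" for y
        by (auto simp: g_def indicator_def)
    qed
    also have "\<dots> = integral\<^sup>L lebesgue (g N) + real N * measure lebesgue A"
      using gi ii by simp
    also have "\<dots> < e/2 + real N * d + d"
      using N mA d by (smt (verit) measure_nonneg mult_left_mono of_nat_0_le_iff)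
    also have "\<dots> = e"
    proof -
      have "(real N + 1) * d = e/2" unfolding d_def
        by (simp add: field_simps)
      then show ?thesis by (simp add: algebra_simps)
    qed
    finally show "integral\<^sup>L lebesgue (\<lambda>y. indicator A y * \<bar>f y\<bar>) < e" .
  qed
qed

definition Tm :: "complex \<Rightarrow> complex \<Rightarrow> complex set \<Rightarrow> complex set" where
  "Tm g x S = (\<lambda>z. x + g * z) ` S"

lemma Tm_lmeas:
  assumes g: "norm g = 1" and S: "S \<in> lmeasurable"
  shows "Tm g x S \<in> lmeasurable" "measure lebesgue (Tm g x S) = measure lebesgue S"
proof -
  have eq: "Tm g x S = (+) x ` ((*) g ` S)" unfolding Tm_def by (simp add: image_image)
  show "Tm g x S \<in> lmeasurable" unfolding eq
    by (rule measurable_translation) (rule rot_lmeasurable(1)[OF g S])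
  show "measure lebesgue (Tm g x S) = measure lebesgue S" unfolding eq
    by (simp add: measure_translation rot_lmeasurable(2)[OF g S])
qed

lemma Tm_diff: "norm g = 1 \<Longrightarrow> Tm g x (A - B) = Tm g x A - Tm g x B"
  unfolding Tm_def by auto

lemma int_diff_bound:
  fixes f :: "complex \<Rightarrow> real"
  assumes f: "integrable lebesgue f" and S: "S \<in> sets lebesgue" and T: "T \<in> sets lebesgue"
  shows "\<bar>set_lebesgue_integral lebesgue S f - set_lebesgue_integral lebesgue T f\<bar> \<le>
         integral\<^sup>L lebesgue (\<lambda>y. indicator ((S - T) \<union> (T - S)) y * \<bar>f y\<bar>)"
proof -
  have iS: "integrable lebesgue (\<lambda>y. indicator S y * f y)"
    using integrable_mult_indicator[OF S f] by simp
  have iT: "integrable lebesgue (\<lambda>y. indicator T y * f y)"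
    using integrable_mult_indicator[OF T f] by simp
  have D: "(S - T) \<union> (T - S) \<in> sets lebesgue" using S T by auto
  have iD: "integrable lebesgue (\<lambda>y. indicator ((S - T) \<union> (T - S)) y * \<bar>f y\<bar>)"
    using integrable_mult_indicator[OF D integrable_abs[OF f]] by simp
  have "set_lebesgue_integral lebesgue S f - set_lebesgue_integral lebesgue T f =
        integral\<^sup>L lebesgue (\<lambda>y. indicator S y * f y - indicator T y * f y)"
    unfolding set_lebesgue_integral_def using iS iT by simp
  also have "\<bar>\<dots>\<bar> \<le> integral\<^sup>L lebesgue (\<lambda>y. indicator ((S - T) \<union> (T - S)) y * \<bar>f y\<bar>)"
    by (rule integral_abs_bound_integral) (use iS iT iD in \<open>auto simp: indicator_def abs_mult\<close>)
  finally show ?thesis .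
qed

lemma meas_lt1:
  assumes "A \<in> lmeasurable" "emeasure lebesgue A < ennreal c"
  shows "measure lebesgue A < c"
proof -
  have "emeasure lebesgue A = ennreal (measure lebesgue A)"
    using assms(1) by (intro emeasure_eq_ennreal_measure) (auto simp: fmeasurable_def)
  with assms(2) show ?thesis
    by (metis ennreal_less_iff ennreal_neg leI less_le_not_le measure_nonneg not_less_zero)
qed

lemma meas_lt2:
  assumes "A \<in> lmeasurable" "measure lebesgue A < c"
  shows "emeasure lebesgue A < ennreal c"
proof -
  have "emeasure lebesgue A = ennreal (measure lebesgue A)"
    using assms(1) by (intro emeasure_eq_ennreal_measure) (auto simp: fmeasurable_def)
  moreover have "0 < c" using assms(2) measure_nonneg by (metis le_less_trans)
  ultimately show ?thesis using assms(2) by (simp add: ennreal_lessI)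
qed

lemma int_cont:
  fixes f :: "complex \<Rightarrow> real"
  assumes f: "integrable lebesgue f" and S: "S \<in> lmeasurable" "bounded S"
    and gk: "gk \<longlonglongrightarrow> g0" "\<And>k. norm (gk k) = 1" "norm g0 = 1" and xk: "xk \<longlonglongrightarrow> x0"
  shows "(\<lambda>k. set_lebesgue_integral lebesgue (Tm (gk k) (xk k) S) f)
           \<longlonglongrightarrow> set_lebesgue_integral lebesgue (Tm g0 x0 S) f"
proof (rule LIMSEQ_I)
  fix e :: real assume e: "e > 0"
  obtain d where d: "d > 0" and dA: "\<And>A. A\<in>sets lebesgue \<Longrightarrow> emeasure lebesgue A < ennreal d \<Longrightarrow>
           integral\<^sup>L lebesgue (\<lambda>y. indicator A y * \<bar>f y\<bar>) < e"
    using abs_cont[OF f e] by blast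
  have d4: "d/4 > 0" using d by simp
  obtain K where K: "closed K" "K \<subseteq> S" "S - K \<in> lmeasurable" "emeasure lebesgue (S - K) < ennreal (d/4)"
    using sets_lebesgue_inner_closed[OF fmeasurableD[OF S(1)] d4] by blast
  obtain U where U: "open U" "S \<subseteq> U" "U - S \<in> lmeasurable" "emeasure lebesgue (U - S) < ennreal (d/4)"
    using sets_lebesgue_outer_open[OF fmeasurableD[OF S(1)] d4] by blast
  have mSK: "measure lebesgue (S - K) < d/4"
    using K(3,4) by (rule meas_lt1)
  have mUS: "measure lebesgue (U - S) < d/4"
    using U(3,4) by (rule meas_lt1)
  have cK: "compact K" using K S(2) bounded_subset compact_eq_bounded_closed by blast
  define T0 where "T0 = (\<lambda>z. x0 + g0 * z)"
  have g0nz: "g0 \<noteq> 0" using gk(3) by (metis norm_zero zero_neq_one)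
  have T0U: "T0 ` U = (\<lambda>w. (w - x0) / g0) -` U"
  proof
    show "T0 ` U \<subseteq> (\<lambda>w. (w - x0) / g0) -` U"
      unfolding T0_def using g0nz by auto
    show "(\<lambda>w. (w - x0) / g0) -` U \<subseteq> T0 ` U"
    proof
      fix w assume "w \<in> (\<lambda>w. (w - x0) / g0) -` U"
      moreover have "w = T0 ((w - x0) / g0)" unfolding T0_def using g0nz by simp
      ultimately show "w \<in> T0 ` U" by blast
    qed
  qed
  have oT0U: "open (T0 ` U)" unfolding T0U
    by (rule continuous_open_vimage[OF U(1)]) (intro continuous_intros, simp add: g0nz)
  have cT0K: "compact (T0 ` K)" unfolding T0_def
    by (intro compact_continuous_image cK continuous_intros)
  obtain r where r: "r > 0" "(\<Union>x\<in>T0 ` K. ball x r) \<subseteq> T0 ` U"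
    using compact_subset_open_imp_ball_epsilon_subset[OF cT0K oT0U] K(2) U(2) by blast
  obtain M where M: "M > 0" "\<And>z. z \<in> K \<Longrightarrow> norm z \<le> M"
    using compact_imp_bounded[OF cK] bounded_pos by blast
  have r2: "r/2 > 0" "r/(2*M) > 0" using r(1) M(1) by auto
  have ev1: "eventually (\<lambda>k. norm (xk k - x0) < r/2) sequentially"
    using LIMSEQ_D[OF xk r2(1)] by (auto simp: eventually_sequentially)
  have ev2: "eventually (\<lambda>k. norm (gk k - g0) < r/(2*M)) sequentially"
    using LIMSEQ_D[OF gk(1) r2(2)] by (auto simp: eventually_sequentially)
  obtain N where N: "\<And>k. k \<ge> N \<Longrightarrow> norm (xk k - x0) < r/2 \<and> norm (gk k - g0) < r/(2*M)"
    using eventually_conj[OF ev1 ev2] unfolding eventually_sequentially by blast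
  show "\<exists>N. \<forall>n\<ge>N. norm (set_lebesgue_integral lebesgue (Tm (gk n) (xk n) S) f -
                      set_lebesgue_integral lebesgue (Tm g0 x0 S) f) < e"
  proof (intro exI[of _ N] allI impI)
    fix k assume k: "k \<ge> N"
    define Tk where "Tk = Tm (gk k) (xk k) S"
    define T0S where "T0S = Tm g0 x0 S"
    have sub: "Tm (gk k) (xk k) K \<subseteq> T0 ` U"
    proof
      fix w assume "w \<in> Tm (gk k) (xk k) K"
      then obtain z where z: "z \<in> K" "w = xk k + gk k * z" unfolding Tm_def by auto
      have "norm ((gk k - g0) * z) \<le> r/(2*M) * M"
        unfolding norm_mult
        by (rule mult_mono) (use N[OF k] M(2)[OF z(1)] r2 in auto)
      also have "\<dots> = r/2" using M(1) by simp
      finally have h1: "norm ((gk k - g0) * z) \<le> r/2" .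
      have "w - T0 z = (xk k - x0) + (gk k - g0) * z"
        unfolding T0_def z(2) by (simp add: algebra_simps)
      then have "norm (w - T0 z) \<le> norm (xk k - x0) + norm ((gk k - g0) * z)"
        by (metis norm_triangle_ineq)
      then have "norm (w - T0 z) < r" using h1 N[OF k] by linarith
      then have "w \<in> ball (T0 z) r" by (simp add: dist_norm norm_minus_commute)
      then show "w \<in> T0 ` U" using r(2) z(1) by blast
    qed
    have lk: "Tk \<in> lmeasurable" "measure lebesgue Tk = measure lebesgue S"
      unfolding Tk_def using Tm_lmeas[OF gk(2) S(1)] by auto
    have l0: "T0S \<in> lmeasurable" "measure lebesgue T0S = measure lebesgue S"
      unfolding T0S_def using Tm_lmeas[OF gk(3) S(1)] by auto
    have inc: "Tk - T0S \<subseteq> Tm (gk k) (xk k) (S - K) \<union> Tm g0 x0 (U - S)"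
    proof
      fix w assume w: "w \<in> Tk - T0S"
      then obtain z where z: "z \<in> S" "w = xk k + gk k * z" unfolding Tk_def Tm_def by auto
      show "w \<in> Tm (gk k) (xk k) (S - K) \<union> Tm g0 x0 (U - S)"
      proof (cases "z \<in> K")
        case True
        then have "w \<in> T0 ` U" using sub z unfolding Tm_def by auto
        then show ?thesis using w unfolding T0S_def Tm_def T0_def by auto
      next
        case False then show ?thesis using z unfolding Tm_def by auto
      qed
    qed
    have m1: "Tm (gk k) (xk k) (S - K) \<in> lmeasurable" "measure lebesgue (Tm (gk k) (xk k) (S - K)) = measure lebesgue (S - K)"
      using Tm_lmeas[OF gk(2) K(3)] by auto
    have m2: "Tm g0 x0 (U - S) \<in> lmeasurable" "measure lebesgue (Tm g0 x0 (U - S)) = measure lebesgue (U - S)"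
      using Tm_lmeas[OF gk(3) U(3)] by auto
    have a: "measure lebesgue (Tk - T0S) < d/2"
    proof -
      have "measure lebesgue (Tk - T0S) \<le> measure lebesgue (Tm (gk k) (xk k) (S - K) \<union> Tm g0 x0 (U - S))"
        by (rule measure_mono_fmeasurable[OF inc]) (use lk l0 m1 m2 in auto)
      also have "\<dots> \<le> measure lebesgue (Tm (gk k) (xk k) (S - K)) + measure lebesgue (Tm g0 x0 (U - S))"
        by (rule measure_Un_le) (use m1 m2 in auto)
      finally show ?thesis using m1 m2 mSK mUS by linarith
    qed
    have b: "measure lebesgue (T0S - Tk) = measure lebesgue (Tk - T0S)"
    proof -
      have "T0S - Tk = T0S - (T0S \<inter> Tk)" "Tk - T0S = Tk - (T0S \<inter> Tk)" by auto
      moreover have "measure lebesgue (T0S - (T0S \<inter> Tk)) = measure lebesgue T0S - measure lebesgue (T0S \<inter> Tk)"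
        by (rule measure_Diff) (use lk l0 in \<open>auto simp: fmeasurable_def\<close>)
      moreover have "measure lebesgue (Tk - (T0S \<inter> Tk)) = measure lebesgue Tk - measure lebesgue (T0S \<inter> Tk)"
        by (rule measure_Diff) (use lk l0 in \<open>auto simp: fmeasurable_def\<close>)
      ultimately show ?thesis using lk l0 by simp
    qed
    define D where "D = (Tk - T0S) \<union> (T0S - Tk)"
    have lD: "D \<in> lmeasurable" unfolding D_def using lk l0 by auto
    have "measure lebesgue D \<le> measure lebesgue (Tk - T0S) + measure lebesgue (T0S - Tk)"
      unfolding D_def by (rule measure_Un_le) (use lk l0 in auto)
    then have mD: "measure lebesgue D < d" using a b by linarith
    have eD: "emeasure lebesgue D < ennreal d"
      using lD mD by (rule meas_lt2)
    have "\<bar>set_lebesgue_integral lebesgue Tk f - set_lebesgue_integral lebesgue T0S f\<bar> \<le>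
          integral\<^sup>L lebesgue (\<lambda>y. indicator D y * \<bar>f y\<bar>)"
      unfolding D_def by (rule int_diff_bound[OF f]) (use lk l0 in auto)
    also have "\<dots> < e" using dA[OF _ eD] lD by auto
    finally show "norm (set_lebesgue_integral lebesgue (Tm (gk k) (xk k) S) f -
                      set_lebesgue_integral lebesgue (Tm g0 x0 S) f) < e"
      unfolding Tk_def T0S_def by simp
  qed
qed

lemma diff_Tm: "x + g * a - (x + g * b) = g * ((a::complex) - b)"
  by (subst right_diff_distrib) simp

lemma dist_Tm: "norm (g::complex) = 1 \<Longrightarrow> dist (x + g * a) (x + g * b) = dist a b"
  by (simp only: dist_norm diff_Tm norm_mult)

lemma diameter_Tm:
  assumes g: "norm g = 1"
  shows "diameter (Tm g x S) = diameter S"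
proof -
  define T where "T = (\<lambda>z. x + g * z)"
  have TS: "Tm g x S = T ` S" unfolding Tm_def T_def ..
  have prod: "map_prod T T ` (S \<times> S) = T ` S \<times> T ` S"
    by (rule map_prod_surj_on) (rule refl)+
  have fneq: "(\<lambda>(a,b). dist a b) \<circ> map_prod T T = (\<lambda>(a,b). dist a b)"
  proof (rule ext, clarify)
    fix a b show "((\<lambda>(a,b). dist a b) \<circ> map_prod T T) (a, b) = dist a b"
      unfolding T_def using dist_Tm[OF g] by simp
  qed
  have im: "(\<lambda>(a,b). dist a b) ` (T ` S \<times> T ` S) = (\<lambda>(a,b). dist a b) ` (S \<times> S)"
    unfolding prod[symmetric] image_comp fneq ..
  have ne: "T ` S = {} \<longleftrightarrow> S = {}" by (rule image_is_empty)
  show ?thesis unfolding diameter_def TS im ne ..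
qed

lemma rot_basis:
  assumes "translation_invariant B"
  shows "rotated_basis B g x = Tm g x ` B 0"
proof -
  have "B x = (\<lambda>R. (\<lambda>y. x + y) ` R) ` B 0"
    using assms unfolding translation_invariant_def by blast
  then show ?thesis
    unfolding rotated_basis_def Tm_def by (simp add: image_image)
qed

definition Gs :: "(complex \<Rightarrow> complex set set) \<Rightarrow> (complex \<Rightarrow> real) \<Rightarrow> complex \<Rightarrow> complex \<Rightarrow> real \<Rightarrow> ereal" where
  "Gs B h g x e = (SUP R\<in>{R\<in>B 0. diameter R < e}. ereal (avg h (Tm g x R)))"

lemma upper_rot:
  assumes "translation_invariant B" "norm g = 1"
  shows "upper_deriv (rotated_basis B g) h x = (INF e\<in>{e. e > 0}. Gs B h g x e)"
proof -
  have "{R \<in> rotated_basis B g x. diameter R < e} = Tm g x ` {R\<in>B 0. diameter R < e}" for e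
    unfolding rot_basis[OF assms(1)] using diameter_Tm[OF assms(2)] by auto
  then show ?thesis unfolding upper_deriv_def Gs_def by (simp add: image_image)
qed

lemma avg_uminus: "avg (\<lambda>y. - h y) R = - avg h R"
  unfolding avg_def set_lebesgue_integral_def by simp

lemma lower_neg: "lower_deriv B' h x = - upper_deriv B' (\<lambda>y. - h y) x"
  unfolding lower_deriv_def upper_deriv_def avg_uminus
  by (simp add: ereal_SUP_uminus_eq[symmetric] ereal_INF_uminus_eq[symmetric])

lemma low_le_up:
  assumes ne: "\<And>e. e > 0 \<Longrightarrow> \<exists>R\<in>B' x. diameter R < e"
  shows "lower_deriv B' h x \<le> upper_deriv B' h x"
  unfolding lower_deriv_def upper_deriv_def
proof (rule SUP_least, rule INF_greatest)
  fix e1 e2 assume e1: "e1 \<in> {e::real. e > 0}" and e2: "e2 \<in> {e::real. e > 0}"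
  obtain R where R: "R \<in> B' x" "diameter R < min e1 e2" using ne e1 e2 by (metis min_less_iff_conj mem_Collect_eq)
  have "(INF R\<in>{R \<in> B' x. diameter R < e1}. ereal (avg h R)) \<le> ereal (avg h R)"
    by (rule INF_lower) (use R in auto)
  also have "\<dots> \<le> (SUP R\<in>{R \<in> B' x. diameter R < e2}. ereal (avg h R))"
    by (rule SUP_upper) (use R in auto)
  finally show "(INF R\<in>{R \<in> B' x. diameter R < e1}. ereal (avg h R)) \<le> (SUP R\<in>{R \<in> B' x. diameter R < e2}. ereal (avg h R))" .
qed

lemma ereal_aux:
  fixes u v :: ereal
  assumes "- v \<le> u"
  shows "(u = ereal a \<and> - v = ereal a) \<longleftrightarrow> (\<not> ereal a < u \<and> \<not> ereal (- a) < v)"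
proof
  assume "u = ereal a \<and> - v = ereal a"
  then show "\<not> ereal a < u \<and> \<not> ereal (- a) < v" by (cases v) auto
next
  assume a: "\<not> ereal a < u \<and> \<not> ereal (- a) < v"
  then have "u \<le> ereal a" "v \<le> ereal (- a)" by auto
  then have "ereal a \<le> - v" by (metis ereal_minus_le_minus ereal_uminus_uminus uminus_ereal.simps(1))
  then show "u = ereal a \<and> - v = ereal a" using assms \<open>u \<le> ereal a\<close> by auto
qed

lemma F_iff:
  assumes f: "integrable lebesgue f" and ne: "\<And>x e. e > 0 \<Longrightarrow> \<exists>R\<in>B' x. diameter R < e"
  shows "f \<in> F_class B' \<longleftrightarrow> (AE x in lebesgue. \<not> (ereal (f x) < upper_deriv B' f x) \<and>
                                   \<not> (ereal (- f x) < upper_deriv B' (\<lambda>y. - f y) x))"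
proof -
  have "(upper_deriv B' f x = ereal (f x) \<and> lower_deriv B' f x = ereal (f x)) \<longleftrightarrow>
        (\<not> (ereal (f x) < upper_deriv B' f x) \<and> \<not> (ereal (- f x) < upper_deriv B' (\<lambda>y. - f y) x))" for x
  proof -
    have le: "- upper_deriv B' (\<lambda>y. - f y) x \<le> upper_deriv B' f x"
      using low_le_up[of B' x f, OF ne] lower_neg[of B' f x] by simp
    show ?thesis
      unfolding lower_neg by (rule ereal_aux[OF le])
  qed
  then have eqAE: "(AE x in lebesgue. upper_deriv B' f x = ereal (f x) \<and> lower_deriv B' f x = ereal (f x)) \<longleftrightarrow>
     (AE x in lebesgue. \<not> (ereal (f x) < upper_deriv B' f x) \<and> \<not> (ereal (- f x) < upper_deriv B' (\<lambda>y. - f y) x))"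
    by (simp only: )
  show ?thesis by (simp only: F_class_def mem_Collect_eq f simp_thms eqAE)
qed

lemma Gs_mono: "e1 \<le> e2 \<Longrightarrow> Gs B h g x e1 \<le> Gs B h g x e2"
  unfolding Gs_def by (rule SUP_subset_mono) auto

lemma bad_iff:
  assumes "translation_invariant B" "norm g = 1"
  shows "ereal (h x) < upper_deriv (rotated_basis B g) h x \<longleftrightarrow>
         (\<exists>q::rat. h x < real_of_rat q \<and> (\<forall>n. ereal (real_of_rat q) < Gs B h g x (inverse (real (Suc n)))))"
  unfolding upper_rot[OF assms]
proof
  assume "ereal (h x) < (INF e\<in>{e. e > 0}. Gs B h g x e)"
  from ereal_dense2[OF this] obtain b where b0: "ereal (h x) < ereal b" "ereal b < (INF e\<in>{e. e > 0}. Gs B h g x e)"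
    by blast
  then have b: "h x < b" "ereal b < (INF e\<in>{e. e > 0}. Gs B h g x e)" by auto
  obtain r where r: "r \<in> \<rat>" "h x < r" "r < b" using Rats_dense_in_real[OF b(1)] by blast
  obtain q where q: "r = real_of_rat q" using r(1) Rats_cases by blast
  have "ereal (real_of_rat q) < Gs B h g x (inverse (real (Suc n)))" for n
  proof -
    have "ereal (real_of_rat q) < ereal b" using r q by simp
    also have "\<dots> < (INF e\<in>{e. e > 0}. Gs B h g x e)" by (rule b(2))
    also have "\<dots> \<le> Gs B h g x (inverse (real (Suc n)))" by (rule INF_lower) simp
    finally show ?thesis .
  qed
  then show "\<exists>q::rat. h x < real_of_rat q \<and> (\<forall>n. ereal (real_of_rat q) < Gs B h g x (inverse (real (Suc n))))"
    using r q by blast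
next
  assume "\<exists>q::rat. h x < real_of_rat q \<and> (\<forall>n. ereal (real_of_rat q) < Gs B h g x (inverse (real (Suc n))))"
  then obtain q :: rat where q: "h x < real_of_rat q" "\<And>n. ereal (real_of_rat q) < Gs B h g x (inverse (real (Suc n)))"
    by blast
  have "ereal (real_of_rat q) \<le> (INF e\<in>{e. e > 0}. Gs B h g x e)"
  proof (rule INF_greatest)
    fix e assume "e \<in> {e::real. e > 0}"
    then obtain n where n: "inverse (real (Suc n)) < e" using reals_Archimedean by auto
    have "ereal (real_of_rat q) < Gs B h g x (inverse (real (Suc n)))" by (rule q(2))
    also have "\<dots> \<le> Gs B h g x e" using n by (intro Gs_mono) simp
    finally show "ereal (real_of_rat q) \<le> Gs B h g x e" by simp
  qed
  moreover have "ereal (h x) < ereal (real_of_rat q)" using q(1) by simp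
  ultimately show "ereal (h x) < (INF e\<in>{e. e > 0}. Gs B h g x e)"
    by (rule order.strict_trans2[rotated])
qed

lemma B0_props:
  assumes "differentiation_basis B" "R \<in> B 0"
  shows "R \<in> lmeasurable" "bounded R" "measure lebesgue R > 0"
proof -
  have "bounded R" "R \<in> sets lebesgue" "measure lebesgue R > 0"
    using assms unfolding differentiation_basis_def by blast+
  then show "R \<in> lmeasurable" "bounded R" "measure lebesgue R > 0"
    using bounded_set_imp_lmeasurable by auto
qed

lemma B0_small:
  assumes "differentiation_basis B" "e > 0"
  shows "\<exists>R\<in>B 0. diameter R < e"
proof -
  obtain Rk :: "nat \<Rightarrow> complex set" where Rk: "\<And>k. Rk k \<in> B 0" "(\<lambda>k. diameter (Rk k)) \<longlonglongrightarrow> 0"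
    using assms(1) unfolding differentiation_basis_def by blast
  obtain k where "norm (diameter (Rk k) - 0) < e" using LIMSEQ_D[OF Rk(2) assms(2)] by blast
  then have "diameter (Rk k) < e" by simp
  then show ?thesis using Rk(1) by blast
qed

lemma avg_cont:
  fixes h :: "complex \<Rightarrow> real"
  assumes h: "integrable lebesgue h" and DB: "differentiation_basis B" and R: "R \<in> B 0"
    and gk: "gk \<longlonglongrightarrow> g0" "\<And>k. norm (gk k) = 1" "norm g0 = 1" and xk: "xk \<longlonglongrightarrow> x0"
  shows "(\<lambda>k. avg h (Tm (gk k) (xk k) R)) \<longlonglongrightarrow> avg h (Tm g0 x0 R)"
proof -
  note P = B0_props[OF DB R]
  have "(\<lambda>k. set_lebesgue_integral lebesgue (Tm (gk k) (xk k) R) h / measure lebesgue R)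
         \<longlonglongrightarrow> set_lebesgue_integral lebesgue (Tm g0 x0 R) h / measure lebesgue R"
    by (intro tendsto_divide tendsto_const int_cont[OF h P(1) P(2) gk xk]) (use P(3) in simp)
  moreover have "avg h (Tm g x R) = set_lebesgue_integral lebesgue (Tm g x R) h / measure lebesgue R"
    if "norm g = 1" for g x
    unfolding avg_def using Tm_lmeas(2)[OF that P(1)] by simp
  ultimately show ?thesis using gk(2,3) by simp
qed

lemma open_Gs:
  fixes h :: "complex \<Rightarrow> real"
  assumes h: "integrable lebesgue h" and DB: "differentiation_basis B" and g: "norm g = 1"
  shows "open {x. ereal q < Gs B h g x e}"
proof -
  have eq: "{x. ereal q < Gs B h g x e} = (\<Union>R\<in>{R\<in>B 0. diameter R < e}. {x. q < avg h (Tm g x R)})"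
    unfolding Gs_def less_SUP_iff by auto
  have "open {x. q < avg h (Tm g x R)}" if R: "R \<in> B 0" for R
  proof (rule open_Collect_less)
    show "continuous_on UNIV (\<lambda>x. q)" by (rule continuous_on_const)
    show "continuous_on UNIV (\<lambda>x. avg h (Tm g x R))"
    proof (rule continuous_on_sequentiallyI)
      fix u :: "nat \<Rightarrow> complex" and a assume "u \<longlonglongrightarrow> a"
      then show "(\<lambda>n. avg h (Tm g (u n) R)) \<longlonglongrightarrow> avg h (Tm g a R)"
        using avg_cont[OF h DB R tendsto_const _ g \<open>u \<longlonglongrightarrow> a\<close>] g by simp
    qed
  qed
  then show ?thesis unfolding eq by (intro open_UN) auto
qed

lemma Gs_semicont:
  fixes h :: "complex \<Rightarrow> real"
  assumes h: "integrable lebesgue h" and DB: "differentiation_basis B"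
    and gk: "gk \<longlonglongrightarrow> g0" "\<And>k. norm (gk k) = 1" "norm g0 = 1"
    and q: "ereal q < Gs B h g0 x e"
  shows "eventually (\<lambda>k. ereal q < Gs B h (gk k) x e) sequentially"
proof -
  obtain R where R: "R \<in> B 0" "diameter R < e" "ereal q < ereal (avg h (Tm g0 x R))"
    using q unfolding Gs_def less_SUP_iff by auto
  have lim: "(\<lambda>k. avg h (Tm (gk k) x R)) \<longlonglongrightarrow> avg h (Tm g0 x R)"
    using avg_cont[OF h DB R(1) gk tendsto_const] by simp
  have "eventually (\<lambda>k. q < avg h (Tm (gk k) x R)) sequentially"
    using order_tendstoD(1)[OF lim] R(3) by simp
  then show ?thesis
  proof (rule eventually_mono)
    fix k assume "q < avg h (Tm (gk k) x R)"
    also have "ereal (avg h (Tm (gk k) x R)) \<le> Gs B h (gk k) x e"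
      unfolding Gs_def by (rule SUP_upper) (use R in auto)
    finally show "ereal q < Gs B h (gk k) x e" by simp
  qed
qed

definition Dset :: "(complex \<Rightarrow> complex set set) \<Rightarrow> (complex \<Rightarrow> real) \<Rightarrow> complex \<Rightarrow> real \<Rightarrow> nat \<Rightarrow> nat \<Rightarrow> complex set" where
  "Dset B h g q k N = {x. h x < q} \<inter> ball 0 (real k) \<inter> {x. ereal q < Gs B h g x (inverse (real (Suc N)))}"

lemma open_lebesgue: "open (S::complex set) \<Longrightarrow> S \<in> sets lebesgue"
  by (rule sets_completionI_sets) (simp add: borel_open)

lemma less_lebesgue:
  fixes h :: "complex \<Rightarrow> real"
  assumes "integrable lebesgue h"
  shows "{x. h x < q} \<in> sets lebesgue"
proof -
  have "h \<in> borel_measurable lebesgue" using assms by auto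
  then have "{w \<in> space lebesgue. h w < q} \<in> sets lebesgue"
    unfolding borel_measurable_iff_less by blast
  then show ?thesis by simp
qed

lemma Dset_lmeas:
  fixes h :: "complex \<Rightarrow> real"
  assumes h: "integrable lebesgue h" and DB: "differentiation_basis B" and g: "norm g = 1"
  shows "Dset B h g q k N \<in> lmeasurable"
proof (rule fmeasurableI2[OF lmeasurable_ball[of 0 "real k"]])
  show "Dset B h g q k N \<subseteq> ball 0 (real k)" unfolding Dset_def by auto
  have "{x. ereal q < Gs B h g x (inverse (real (Suc N)))} \<in> sets lebesgue"
    by (rule open_lebesgue[OF open_Gs[OF h DB g]])
  then show "Dset B h g q k N \<in> sets lebesgue"
    unfolding Dset_def using less_lebesgue[OF h] open_lebesgue[OF open_ball] by blast
qed

lemma Dset_mono: "N \<le> N' \<Longrightarrow> Dset B h g q k N' \<subseteq> Dset B h g q k N"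
proof -
  assume "N \<le> N'"
  then have "inverse (real (Suc N')) \<le> inverse (real (Suc N))" by (simp add: le_imp_inverse_le)
  then have "Gs B h g x (inverse (real (Suc N'))) \<le> Gs B h g x (inverse (real (Suc N)))" for x
    by (rule Gs_mono)
  then show ?thesis unfolding Dset_def using order.strict_trans2 by blast
qed

lemma null_iff:
  fixes h :: "complex \<Rightarrow> real"
  assumes h: "integrable lebesgue h" and DB: "differentiation_basis B"
    and TI: "translation_invariant B" and g: "norm g = 1"
  shows "(AE x in lebesgue. \<not> (ereal (h x) < upper_deriv (rotated_basis B g) h x)) \<longleftrightarrow>
         (\<forall>(q::rat) (k::nat) (j::nat). \<exists>N. measure lebesgue (Dset B h g (real_of_rat q) k N) \<le> inverse (real (Suc j)))"
proof -
  define Z where "Z q k = (\<Inter>N. Dset B h g (real_of_rat q) k N)" for q :: rat and k :: nat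
  have Dl: "Dset B h g q' k N \<in> lmeasurable" for q' k N by (rule Dset_lmeas[OF h DB g])
  have Zs: "Z q k \<in> sets lebesgue" for q k
    unfolding Z_def by (rule sets.countable_INT'') (use Dl in auto)
  have Zl: "Z q k \<in> lmeasurable" for q k
    by (rule fmeasurableI2[OF Dl[of "real_of_rat q" k 0]]) (use Zs in \<open>auto simp: Z_def\<close>)
  have memZ: "x \<in> Z q k \<longleftrightarrow> h x < real_of_rat q \<and> norm x < real k \<and>
        (\<forall>n. ereal (real_of_rat q) < Gs B h g x (inverse (real (Suc n))))" for x q k
    unfolding Z_def Dset_def by auto
  have badZ: "ereal (h x) < upper_deriv (rotated_basis B g) h x \<longleftrightarrow> (\<exists>q k. x \<in> Z q k)" for x
  proof -
    obtain k :: nat where "norm x < real k" using reals_Archimedean2 by blast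
    then show ?thesis unfolding bad_iff[OF TI g] memZ by blast
  qed
  have Z0: "measure lebesgue (Z q k) = 0 \<longleftrightarrow>
           (\<forall>j. \<exists>N. measure lebesgue (Dset B h g (real_of_rat q) k N) \<le> inverse (real (Suc j)))" for q k
  proof
    assume m0: "measure lebesgue (Z q k) = 0"
    have lim: "(\<lambda>N. measure lebesgue (Dset B h g (real_of_rat q) k N)) \<longlonglongrightarrow> measure lebesgue (Z q k)"
      unfolding Z_def
    proof (rule Lim_measure_decseq)
      show "range (Dset B h g (real_of_rat q) k) \<subseteq> sets lebesgue" using Dl by auto
      show "decseq (Dset B h g (real_of_rat q) k)" by (rule decseq_SucI) (rule Dset_mono, simp)
      show "emeasure lebesgue (Dset B h g (real_of_rat q) k i) \<noteq> \<infinity>" for i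
        using fmeasurableD2[OF Dl] by simp
    qed
    show "\<forall>j. \<exists>N. measure lebesgue (Dset B h g (real_of_rat q) k N) \<le> inverse (real (Suc j))"
    proof
      fix j
      have "inverse (real (Suc j)) > 0" by simp
      then have "eventually (\<lambda>N. measure lebesgue (Dset B h g (real_of_rat q) k N) < inverse (real (Suc j))) sequentially"
        using order_tendstoD(2)[OF lim] m0 by simp
      then show "\<exists>N. measure lebesgue (Dset B h g (real_of_rat q) k N) \<le> inverse (real (Suc j))"
        unfolding eventually_sequentially using less_imp_le by blast
    qed
  next
    assume a: "\<forall>j. \<exists>N. measure lebesgue (Dset B h g (real_of_rat q) k N) \<le> inverse (real (Suc j))"
    have le: "measure lebesgue (Z q k) \<le> inverse (real (Suc j))" for j
    proof -
      obtain N where N: "measure lebesgue (Dset B h g (real_of_rat q) k N) \<le> inverse (real (Suc j))"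
        using a by blast
      have "measure lebesgue (Z q k) \<le> measure lebesgue (Dset B h g (real_of_rat q) k N)"
        by (rule measure_mono_fmeasurable) (use Zs Dl in \<open>auto simp: Z_def\<close>)
      then show ?thesis using N by linarith
    qed
    show "measure lebesgue (Z q k) = 0"
    proof (rule ccontr)
      assume "measure lebesgue (Z q k) \<noteq> 0"
      then have "measure lebesgue (Z q k) > 0" using measure_nonneg by (simp add: order_less_le)
      then obtain j where "inverse (real (Suc j)) < measure lebesgue (Z q k)"
        using reals_Archimedean by blast
      then show False using le[of j] by linarith
    qed
  qed
  have eZ: "emeasure lebesgue (Z q k) = ennreal (measure lebesgue (Z q k))" for q k
    by (rule emeasure_eq_ennreal_measure[OF fmeasurableD2[OF Zl]])
  have AEZ: "(AE x in lebesgue. x \<notin> Z q k) \<longleftrightarrow> measure lebesgue (Z q k) = 0" for q k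
  proof -
    have "(AE x in lebesgue. x \<notin> Z q k) \<longleftrightarrow> emeasure lebesgue (Z q k) = 0"
      by (rule AE_iff_measurable[OF Zs]) simp
    then show ?thesis unfolding eZ by simp
  qed
  have "(AE x in lebesgue. \<not> (ereal (h x) < upper_deriv (rotated_basis B g) h x)) \<longleftrightarrow>
        (AE x in lebesgue. \<forall>q k. x \<notin> Z q k)"
    unfolding badZ by simp
  also have "\<dots> \<longleftrightarrow> (\<forall>q k. AE x in lebesgue. x \<notin> Z q k)"
    by (simp add: AE_all_countable)
  also have "\<dots> \<longleftrightarrow> (\<forall>q k. measure lebesgue (Z q k) = 0)"
    unfolding AEZ ..
  also have "\<dots> \<longleftrightarrow> (\<forall>(q::rat) (k::nat) (j::nat). \<exists>N. measure lebesgue (Dset B h g (real_of_rat q) k N) \<le> inverse (real (Suc j)))"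
    unfolding Z0 ..
  finally show ?thesis .
qed


lemma Gamma2_norm: "g \<in> Gamma2 \<Longrightarrow> norm g = 1"
  unfolding Gamma2_def by simp

lemma closed_D:
  fixes h :: "complex \<Rightarrow> real"
  assumes h: "integrable lebesgue h" and DB: "differentiation_basis B"
    and gk: "\<And>m. gk m \<in> Gamma2" "gk \<longlonglongrightarrow> g0" "g0 \<in> Gamma2"
    and le: "\<And>m. measure lebesgue (Dset B h (gk m) q k N) \<le> c"
  shows "measure lebesgue (Dset B h g0 q k N) \<le> c"
proof -
  have nk: "norm (gk m) = 1" for m using gk(1) Gamma2_norm by blast
  have n0: "norm g0 = 1" using gk(3) Gamma2_norm by blast
  define I where "I M = (\<Inter>m. Dset B h (gk (m + M)) q k N)" for M
  have Dl: "Dset B h (gk m) q k N \<in> lmeasurable" for m by (rule Dset_lmeas[OF h DB nk])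
  have D0: "Dset B h g0 q k N \<in> lmeasurable" by (rule Dset_lmeas[OF h DB n0])
  have Is: "I M \<in> sets lebesgue" for M
    unfolding I_def by (rule sets.countable_INT'') (use Dl in auto)
  have Isub: "I M \<subseteq> Dset B h (gk M) q k N" for M
  proof
    fix x assume "x \<in> I M"
    then have "x \<in> Dset B h (gk (0 + M)) q k N" unfolding I_def by blast
    then show "x \<in> Dset B h (gk M) q k N" by simp
  qed
  have inc: "incseq I"
  proof (rule incseq_SucI)
    fix M show "I M \<subseteq> I (Suc M)"
      unfolding I_def
    proof
      fix x assume "x \<in> (\<Inter>m. Dset B h (gk (m + M)) q k N)"
      then have "x \<in> Dset B h (gk (Suc m + M)) q k N" for m by blast
      then show "x \<in> (\<Inter>m. Dset B h (gk (m + Suc M)) q k N)" by simp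
    qed
  qed
  have Uball: "(\<Union>M. I M) \<subseteq> ball 0 (real k)"
    using Isub unfolding Dset_def by blast
  have Ul: "(\<Union>M. I M) \<in> lmeasurable"
    by (rule fmeasurableI2[OF lmeasurable_ball Uball]) (use Is in auto)
  have lim: "(\<lambda>M. measure lebesgue (I M)) \<longlonglongrightarrow> measure lebesgue (\<Union>M. I M)"
    by (rule Lim_measure_incseq) (use Is inc fmeasurableD2[OF Ul] in auto)
  have IM: "measure lebesgue (I M) \<le> c" for M
  proof -
    have "measure lebesgue (I M) \<le> measure lebesgue (Dset B h (gk M) q k N)"
      by (rule measure_mono_fmeasurable[OF Isub Is Dl])
    then show ?thesis using le[of M] by linarith
  qed
  have Ule: "measure lebesgue (\<Union>M. I M) \<le> c"
    by (rule LIMSEQ_le_const2[OF lim]) (use IM in auto)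
  have sub: "Dset B h g0 q k N \<subseteq> (\<Union>M. I M)"
  proof
    fix x assume x: "x \<in> Dset B h g0 q k N"
    then have x1: "h x < q" "x \<in> ball 0 (real k)" "ereal q < Gs B h g0 x (inverse (real (Suc N)))"
      unfolding Dset_def by auto
    have "eventually (\<lambda>m. ereal q < Gs B h (gk m) x (inverse (real (Suc N)))) sequentially"
      by (rule Gs_semicont[OF h DB gk(2) nk n0 x1(3)])
    then obtain M where M: "\<And>m. m \<ge> M \<Longrightarrow> ereal q < Gs B h (gk m) x (inverse (real (Suc N)))"
      unfolding eventually_sequentially by blast
    have "x \<in> I M" unfolding I_def Dset_def using x1(1,2) M by auto
    then show "x \<in> (\<Union>M. I M)" by blast
  qed
  have "measure lebesgue (Dset B h g0 q k N) \<le> measure lebesgue (\<Union>M. I M)"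
    by (rule measure_mono_fmeasurable[OF sub fmeasurableD[OF D0] Ul])
  then show ?thesis using Ule by linarith
qed

lemma exp_i_bound: "cmod (exp (\<i> * complex_of_real t) - 1) \<le> \<bar>t\<bar>"
proof -
  have re: "Re (exp (\<i> * complex_of_real t) - 1) = cos t - 1" by (simp add: Re_exp)
  have im: "Im (exp (\<i> * complex_of_real t) - 1) = sin t" by (simp add: Im_exp)
  have "(cmod (exp (\<i> * complex_of_real t) - 1))\<^sup>2 = (cos t - 1)\<^sup>2 + (sin t)\<^sup>2"
    unfolding cmod_power2 re im ..
  also have "\<dots> = 2 - 2 * cos t"
    using sin_cos_squared_add[of t] by (simp add: power2_eq_square algebra_simps)
  also have "\<dots> = 4 * (sin (t/2))\<^sup>2"
    using cos_double_sin[of "t/2"] by simp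
  also have "\<dots> \<le> 4 * (t/2)\<^sup>2"
  proof -
    have "\<bar>sin (t/2)\<bar> \<le> \<bar>t/2\<bar>" by (rule abs_sin_x_le_abs_x)
    then have "\<bar>sin (t/2)\<bar>\<^sup>2 \<le> \<bar>t/2\<bar>\<^sup>2" by (rule power_mono) simp
    then show ?thesis by (simp add: power_divide)
  qed
  also have "\<dots> = \<bar>t\<bar>\<^sup>2" by (simp add: power2_eq_square)
  finally show ?thesis by (rule power2_le_imp_le) simp
qed

lemma dist_le_arc:
  assumes z: "z \<in> Gamma2" and w: "w \<in> Gamma2"
  shows "norm (w - z) \<le> arc_dist z w"
proof -
  have nz: "norm z = 1" and nw: "norm w = 1" using z w Gamma2_norm by auto
  define u where "u = z / w"
  have wnz: "w \<noteq> 0" using nw by auto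
  have nu: "norm u = 1" unfolding u_def using nz nw by (simp add: norm_divide)
  have unz: "u \<noteq> 0" using nu by auto
  have ue: "u = exp (\<i> * complex_of_real (Arg u))"
    using Arg_eq[OF unz] nu by simp
  have "w - z = - (w * (u - 1))" unfolding u_def using wnz by (simp add: algebra_simps)
  then have "norm (w - z) = norm (u - 1)" using nw by (simp add: norm_mult)
  also have "\<dots> \<le> \<bar>Arg u\<bar>" by (subst ue) (rule exp_i_bound)
  finally show ?thesis unfolding arc_dist_def u_def .
qed

lemma open_notC:
  fixes h :: "complex \<Rightarrow> real"
  assumes h: "integrable lebesgue h" and DB: "differentiation_basis B"
  shows "open_Gamma2 {g\<in>Gamma2. \<not> measure lebesgue (Dset B h g q k N) \<le> c}"
  unfolding open_Gamma2_def
proof (intro conjI ballI)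
  show "{g\<in>Gamma2. \<not> measure lebesgue (Dset B h g q k N) \<le> c} \<subseteq> Gamma2" by blast
  fix z assume zV: "z \<in> {g\<in>Gamma2. \<not> measure lebesgue (Dset B h g q k N) \<le> c}"
  show "\<exists>e>0. \<forall>w\<in>Gamma2. arc_dist z w < e \<longrightarrow> w \<in> {g\<in>Gamma2. \<not> measure lebesgue (Dset B h g q k N) \<le> c}"
  proof (rule ccontr)
    assume nt: "\<not> ?thesis"
    have "\<exists>w. w \<in> Gamma2 \<and> arc_dist z w < inverse (real (Suc m)) \<and> measure lebesgue (Dset B h w q k N) \<le> c" for m
    proof -
      have "inverse (real (Suc m)) > 0" by simp
      with nt obtain w where "w \<in> Gamma2" "arc_dist z w < inverse (real (Suc m))"
          "w \<notin> {g\<in>Gamma2. \<not> measure lebesgue (Dset B h g q k N) \<le> c}"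
        by blast
      then show ?thesis by blast
    qed
    then have "\<forall>m. \<exists>w. w \<in> Gamma2 \<and> arc_dist z w < inverse (real (Suc m)) \<and> measure lebesgue (Dset B h w q k N) \<le> c"
      by blast
    then have "\<exists>w. \<forall>m. w m \<in> Gamma2 \<and> arc_dist z (w m) < inverse (real (Suc m)) \<and> measure lebesgue (Dset B h (w m) q k N) \<le> c"
      by (rule choice)
    then obtain w where w: "\<And>m. w m \<in> Gamma2" "\<And>m. arc_dist z (w m) < inverse (real (Suc m))"
        "\<And>m. measure lebesgue (Dset B h (w m) q k N) \<le> c"
      by blast
    have zG: "z \<in> Gamma2" using zV by blast
    have "w \<longlonglongrightarrow> z"
    proof (rule LIMSEQ_I)
      fix r :: real assume r: "r > 0"
      obtain N0 where N0: "inverse (real (Suc N0)) < r" using reals_Archimedean[OF r] by blast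
      show "\<exists>no. \<forall>n\<ge>no. norm (w n - z) < r"
      proof (intro exI allI impI)
        fix n assume n: "n \<ge> N0"
        have "norm (w n - z) \<le> arc_dist z (w n)" by (rule dist_le_arc[OF zG w(1)])
        also have "\<dots> < inverse (real (Suc n))" by (rule w(2))
        also have "\<dots> \<le> inverse (real (Suc N0))" using n by (simp add: le_imp_inverse_le)
        finally show "norm (w n - z) < r" using N0 by linarith
      qed
    qed
    then have "measure lebesgue (Dset B h z q k N) \<le> c"
      by (rule closed_D[OF h DB w(1) _ zG w(3)])
    then show False using zV by blast
  qed
qed

theorem theorem2:
  fixes B :: "complex \<Rightarrow> complex set set" and E :: "complex set"
  assumes "differentiation_basis B"
    and "translation_invariant B"
    and "W_set B E"
  shows "G_delta_sigma_Gamma2 E"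
proof -
  note DB = assms(1) and TI = assms(2)
  obtain f where EG: "E \<subseteq> Gamma2" and f: "integrable lebesgue f"
    and fE: "\<And>g. g \<in> E \<Longrightarrow> f \<notin> F_class (rotated_basis B g)"
    and fnE: "\<And>g. g \<in> Gamma2 - E \<Longrightarrow> f \<in> F_class (rotated_basis B g)"
    using assms(3) unfolding W_set_def by blast
  define hs where "hs s = (if s then f else (\<lambda>y. - f y))" for s :: bool
  have hsi: "integrable lebesgue (hs s)" for s unfolding hs_def using f by auto
  have ne: "\<exists>R\<in>rotated_basis B g x. diameter R < e" if ng1: "norm g = 1" and ep: "e > 0" for g x e
  proof -
    obtain R where R: "R \<in> B 0" "diameter R < e" using B0_small[OF DB ep] by blast
    have "Tm g x R \<in> rotated_basis B g x" unfolding rot_basis[OF TI] using R(1) by blast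
    moreover have "diameter (Tm g x R) < e" using diameter_Tm[OF ng1] R(2) by simp
    ultimately show ?thesis by blast
  qed
  define good where "good g \<longleftrightarrow> (\<forall>(s::bool) (q::rat) (k::nat) (j::nat). \<exists>N.
        measure lebesgue (Dset B (hs s) g (real_of_rat q) k N) \<le> inverse (real (Suc j)))" for g
  have Fgood: "f \<in> F_class (rotated_basis B g) \<longleftrightarrow> good g" if g: "g \<in> Gamma2" for g
  proof -
    have ng: "norm g = 1" using g Gamma2_norm by blast
    have "f \<in> F_class (rotated_basis B g) \<longleftrightarrow>
          (AE x in lebesgue. \<not> (ereal (f x) < upper_deriv (rotated_basis B g) f x) \<and>
                             \<not> (ereal (- f x) < upper_deriv (rotated_basis B g) (\<lambda>y. - f y) x))"
      by (rule F_iff[OF f]) (rule ne[OF ng])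
    also have "\<dots> \<longleftrightarrow> (AE x in lebesgue. \<not> (ereal (f x) < upper_deriv (rotated_basis B g) f x)) \<and>
                     (AE x in lebesgue. \<not> (ereal (- f x) < upper_deriv (rotated_basis B g) (\<lambda>y. - f y) x))"
      by (rule AE_conj_iff)
    also have "\<dots> \<longleftrightarrow> (\<forall>s. AE x in lebesgue. \<not> (ereal (hs s x) < upper_deriv (rotated_basis B g) (hs s) x))"
    proof -
      have "(\<forall>s. P s) \<longleftrightarrow> P True \<and> P False" for P by (metis (full_types))
      then show ?thesis unfolding hs_def by simp
    qed
    also have "\<dots> \<longleftrightarrow> good g"
      unfolding good_def using null_iff[OF hsi DB TI ng] by simp
    finally show ?thesis .
  qed
  have Eeq: "E = {g\<in>Gamma2. \<not> good g}"
    using EG fE fnE Fgood by blast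
  define P where "P i m = {g\<in>Gamma2. \<not> measure lebesgue (Dset B (hs (fst i)) g (real_of_rat (fst (snd i)))
         (fst (snd (snd i))) m) \<le> inverse (real (Suc (snd (snd (snd i)))))}"
    for i :: "bool \<times> rat \<times> nat \<times> nat" and m
  define U where "U n m = P (from_nat n) m" for n m :: nat
  have oU: "open_Gamma2 (U n m)" for n m
    unfolding U_def P_def by (rule open_notC[OF hsi DB])
  have "E = (\<Union>n. \<Inter>m. U n m)"
  proof
    show "E \<subseteq> (\<Union>n. \<Inter>m. U n m)"
    proof
      fix g assume "g \<in> E"
      then have g: "g \<in> Gamma2" "\<not> good g" using Eeq by auto
      then obtain s q k j where sq: "\<forall>N. \<not> measure lebesgue (Dset B (hs s) g (real_of_rat q) k N) \<le> inverse (real (Suc j))"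
        unfolding good_def by blast
      have "g \<in> (\<Inter>m. U (to_nat (s, q, k, j)) m)"
        unfolding U_def P_def using g(1) sq by simp
      then show "g \<in> (\<Union>n. \<Inter>m. U n m)" by blast
    qed
    show "(\<Union>n. \<Inter>m. U n m) \<subseteq> E"
    proof
      fix g assume "g \<in> (\<Union>n. \<Inter>m. U n m)"
      then obtain n where n: "\<And>m. g \<in> U n m" by blast
      obtain s :: bool and q :: rat and k :: nat and j :: nat where i: "from_nat n = (s, q, k, j)"
        by (cases "from_nat n :: bool \<times> rat \<times> nat \<times> nat") auto
      have gG: "g \<in> Gamma2" using n[of 0] unfolding U_def P_def by blast
      have "\<forall>N. \<not> measure lebesgue (Dset B (hs s) g (real_of_rat q) k N) \<le> inverse (real (Suc j))"
        using n unfolding U_def P_def i by simp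
      then have "\<not> good g" unfolding good_def by blast
      then show "g \<in> E" using Eeq gG by blast
    qed
  qed
  then show ?thesis unfolding G_delta_sigma_Gamma2_def using oU by blast
qed

end
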